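(* Let $m_0,r\ge 0$ and $m$ be integers with $0\le m\le m_0+r$, and let $X\sim\mathrm{Hyper}(m_0,r;m)$, i.e. $\mathbb P(X=k)=\binom{m_0}{k}\binom{r}{m-k}\big/\binom{m_0+r}{m}$. Then $$\mathbb E\left[\frac{X}{1+m-X}\cdot\frac{r+X-m}{1+m_0-X}\right]=1-\frac{\binom{m_0}{m_0\wedge m}\binom{r}{m-m_0\wedge m}}{\binom{m_0+r}{m}}.$$ In particular this expectation is at most $1$ for every $m$.
   Context: $a\wedge b=\min(a,b)$. Binomial coefficient conventions: $\binom{0}{0}=1$, and $\binom{n}{k}=0$ if $n<0$, or if $k<0$, or if $k>n$. *)

theory Defs
  imports "HOL-Analysis.Analysis"
begin

definition binomZ :: "int \<Rightarrow> int \<Rightarrow> real" where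
  "binomZ n k = (if n < 0 \<or> k < 0 \<or> k > n then 0 else real (nat n choose nat k))"

definition hyper_pmf :: "nat \<Rightarrow> nat \<Rightarrow> nat \<Rightarrow> int \<Rightarrow> real" where
  "hyper_pmf m0 r m k = binomZ (int m0) k * binomZ (int r) (int m - k) / binomZ (int m0 + int r) (int m)"

definition hyper_expect :: "nat \<Rightarrow> nat \<Rightarrow> nat \<Rightarrow> (int \<Rightarrow> real) \<Rightarrow> real" where
  "hyper_expect m0 r m g = (\<Sum>k\<in>{0..int m}. hyper_pmf m0 r m k * g k)"

end

theory Submission imports Defs begin

lemma chooseL: "(n choose Suc j) * Suc j = (n choose j) * (n - j)"
  using times_binomial_minus1_eq[of "Suc j" n] binomial_absorb_comp[of n j]
  by (simp add: mult.commute)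

lemma chooseR: "real (n choose Suc j) * real (Suc j) = real (n choose j) * real (n - j)"
  using chooseL by (metis of_nat_mult)

lemma step:
  fixes m0 r m i :: nat
  assumes "i < m"
  shows "real (m0 choose Suc i) * real (r choose (m - Suc i)) *
     ((real_of_int (int (Suc i)) / real_of_int (1 + int m - int (Suc i))) *
      (real_of_int (int r + int (Suc i) - int m) / real_of_int (1 + int m0 - int (Suc i))))
   = (if i < m0 then real (m0 choose i) * real (r choose (m - i)) else 0)"
proof (cases "i < m0")
  case False
  then have "m0 choose Suc i = 0" by simp
  with False show ?thesis by simp
next
  case True
  define j where "j = m - Suc i"
  have mi: "m - i = Suc j" using assms j_def by simp
  have e1: "real_of_int (1 + int m - int (Suc i)) = real (Suc j)" using assms j_def by simp
  have e2: "real_of_int (1 + int m0 - int (Suc i)) = real (m0 - i)" using True by simp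
  have A: "real (m0 choose Suc i) * real (Suc i) / real (m0 - i) = real (m0 choose i)"
    using chooseR[of m0 i] True by (simp add: field_simps)
  have B: "real (r choose j) * real_of_int (int r + int (Suc i) - int m) / real (Suc j) = real (r choose (m - i))"
  proof (cases "j \<le> r")
    case True
    have "real_of_int (int r + int (Suc i) - int m) = real (r - j)" using True assms j_def by simp
    then show ?thesis using chooseR[of r j] mi by (simp add: field_simps)
  next
    case False
    then show ?thesis using mi by (simp add: binomial_eq_0)
  qed
  have "real (m0 choose Suc i) * real (r choose (m - Suc i)) *
     ((real_of_int (int (Suc i)) / real_of_int (1 + int m - int (Suc i))) *
      (real_of_int (int r + int (Suc i) - int m) / real_of_int (1 + int m0 - int (Suc i))))
     = (real (m0 choose Suc i) * real (Suc i) / real (m0 - i)) *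
       (real (r choose j) * real_of_int (int r + int (Suc i) - int m) / real (Suc j))"
    unfolding e1 e2 j_def[symmetric] by (simp add: field_simps)
  also have "\<dots> = real (m0 choose i) * real (r choose (m - i))" using A B by simp
  finally show ?thesis using True by simp
qed


theorem mainTheorem4:
  fixes m0 r m :: nat
  assumes "m \<le> m0 + r"
  shows "hyper_expect m0 r m
           (\<lambda>X. (real_of_int X / real_of_int (1 + int m - X)) *
                 (real_of_int (int r + X - int m) / real_of_int (1 + int m0 - X)))
         = 1 - binomZ (int m0) (int (min m0 m)) * binomZ (int r) (int m - int (min m0 m))
                 / binomZ (int m0 + int r) (int m)
       \<and> hyper_expect m0 r m
           (\<lambda>X. (real_of_int X / real_of_int (1 + int m - X)) *
                 (real_of_int (int r + X - int m) / real_of_int (1 + int m0 - X))) \<le> 1"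
proof -
  define g where "g = (\<lambda>X::int. (real_of_int X / real_of_int (1 + int m - X)) *
                 (real_of_int (int r + X - int m) / real_of_int (1 + int m0 - X)))"
  define q where "q = (\<lambda>i::nat. real (m0 choose i) * real (r choose (m - i)))"
  define N where "N = real ((m0 + r) choose m)"
  define M where "M = min m0 m"
  have Npos: "N > 0" using assms unfolding N_def by simp
  have bN: "binomZ (int m0 + int r) (int m) = N" using assms unfolding binomZ_def N_def
    by (simp add: nat_add_distrib)
  have pmf: "hyper_pmf m0 r m (int k) = q k / N" if "k \<le> m" for k
  proof -
    have "nat (int m - int k) = m - k" using that by simp
    then show ?thesis using that unfolding hyper_pmf_def bN unfolding q_def binomZ_def
      by (auto simp: binomial_eq_0)
  qed
  have img: "{0..int m} = int ` {0..m}"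
    by (auto simp: image_iff intro!: bexI[where x="nat _"])
  have E: "hyper_expect m0 r m g = (\<Sum>k=0..m. q k / N * g (int k))"
    unfolding hyper_expect_def img
    by (subst sum.reindex) (auto simp: pmf)
  also have "\<dots> = (\<Sum>k\<in>insert 0 {1..m}. q k / N * g (int k))"
    by (rule sum.cong) auto
  also have "\<dots> = (\<Sum>k=1..m. q k / N * g (int k))"
    by (simp add: g_def)
  also have "\<dots> = (\<Sum>i<m. q (Suc i) / N * g (int (Suc i)))"
    by (subst sum.reindex_bij_witness[where i="\<lambda>k. k - 1" and j=Suc]) auto
  also have "\<dots> = (\<Sum>i<m. (if i < m0 then q i else 0) / N)"
  proof (rule sum.cong)
    fix i assume im: "i \<in> {..<m}"
    have "q (Suc i) * g (int (Suc i)) = (if i < m0 then q i else 0)"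
      unfolding q_def g_def by (rule step) (use im in simp)
    then show "q (Suc i) / N * g (int (Suc i)) = (if i < m0 then q i else 0) / N"
      by (simp only: times_divide_eq_left)
  qed simp
  also have "\<dots> = (\<Sum>i<M. q i) / N"
  proof -
    have "(\<Sum>i<m. (if i < m0 then q i else 0) / N) = (\<Sum>i<m. (if i < m0 then q i else 0)) / N"
      by (simp add: sum_divide_distrib)
    also have "(\<Sum>i<m. (if i < m0 then q i else 0)) = (\<Sum>i\<in>{..<m} \<inter> {i. i < m0}. q i)"
      by (simp add: sum.inter_restrict)
    also have "{..<m} \<inter> {i. i < m0} = {..<M}" unfolding M_def by auto
    finally show ?thesis .
  qed
  finally have E1: "hyper_expect m0 r m g = (\<Sum>i<M. q i) / N" .
  have V: "(\<Sum>i\<le>m. q i) = N"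
  proof -
    have "(\<Sum>i\<le>m. q i) = real (\<Sum>i\<le>m. (m0 choose i) * (r choose (m - i)))"
      unfolding q_def by simp
    also have "\<dots> = N" unfolding N_def vandermonde ..
    finally show ?thesis .
  qed
  have "(\<Sum>i\<le>m. q i) = (\<Sum>i\<le>M. q i)"
  proof -
    have "(\<Sum>i\<le>m. q i) = (\<Sum>i\<in>{..M} \<union> ({..m} - {..M}). q i)"
      by (rule sum.cong) (auto simp: M_def)
    also have "\<dots> = (\<Sum>i\<le>M. q i) + (\<Sum>i\<in>{..m} - {..M}. q i)"
      by (rule sum.union_disjoint) auto
    also have "(\<Sum>i\<in>{..m} - {..M}. q i) = 0"
      by (rule sum.neutral) (auto simp: q_def M_def binomial_eq_0)
    finally show ?thesis by simp
  qed
  then have "(\<Sum>i<M. q i) = N - q M" using V by (simp add: lessThan_Suc_atMost[symmetric])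
  then have E2: "hyper_expect m0 r m g = 1 - q M / N" using E1 Npos by (simp add: field_simps)
  have rhs: "binomZ (int m0) (int M) * binomZ (int r) (int m - int M) = q M"
    unfolding binomZ_def q_def M_def by (auto simp: binomial_eq_0 of_nat_diff nat_diff_distrib)
  have qM: "q M \<ge> 0" unfolding q_def by simp
  show ?thesis
    using E2 rhs bN Npos qM unfolding g_def[symmetric] M_def[symmetric]
    by simp
qed

end
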